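(* For $B=\{x,y\}$ the equivalence relation $\equiv_{\textsc{MaxCut},B}$ restricted to $B$-boundaried graphs $G_B$ with $G-B$ edgeless has infinitely many equivalence classes; consequently, the parameterized problem \textsc{Maximum Cut}[vc] does not admit a boundaried kernelization (of any computable size $f$).
   Context: A boundaried graph $G_B$ is a finite simple graph $G$ together with a set $B\subseteq V(G)$ (the boundary). For boundaried graphs $G_B$ and $H_C$ with $V(G)\cap V(H)\subseteq B\cap C$, the gluing $G_B\oplus H_C$ is the simple graph obtained from the disjoint union of $G$ and $H$ by identifying each vertex of $B\cap C$ in $G$ with the identically named vertex in $H$ (an edge present in both is kept once). For an isomorphism-invariant optimization problem $\Pi$ on graphs with optimum value $\mathrm{OPT}_\Pi(G)$, two $B$-boundaried graphs $G_B,G'_B$ are gluing equivalent w.r.t. $\Pi$ and $B$, written $G_B\equiv_{\Pi,B}G'_B$, if there is $\Delta\in\mathbb{Z}$ with $\mathrm{OPT}_\Pi(G_B\oplus H_B)=\mathrm{OPT}_\Pi(G'_B\oplus H_B)+\Delta$ for every boundaried graph $H_B$. For a pure graph minimization problem $\rho$, a $\rho$-solution of $G$ is a feasible solution $s$ with value $\rho(G,s)$. For computable $f$, a boundaried kernelization of size $f$ for $\Pi[\rho]$ is a polynomial-time algorithm that, given a boundaried graph $G_B$ and a $\rho$-solution $s$ of $G$, outputs a boundaried graph $G'_B$ with $G_B\equiv_{\Pi,B}G'_B$, a $\rho$-solution $s'$ of $G'$ with $|G'|,|s'|,\rho(G',s')\le f(|B|+\rho(G,s))$ (encoding sizes), and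 an integer $\Delta$ with $\mathrm{OPT}_\Pi(G_B\oplus H_B)=\mathrm{OPT}_\Pi(G'_B\oplus H_B)+\Delta$ for all $H_B$. \textsc{Maximum Cut} is the maximization problem whose feasible solutions on $G$ are partitions $V(G)=X\,\dot\cup\,Y$, with value the number of edges with one endpoint in $X$ and one in $Y$. \textsc{Vertex Cover} (vc) is the minimization problem with feasible solutions $S\subseteq V(G)$ such that $G-S$ is edgeless, value $|S|$; \textsc{Maximum Cut}[vc] means $\rho=$ \textsc{Vertex Cover}. *)

theory Defs
  imports Main
begin

text \<open>Finite simple graphs on vertex names of type nat: a pair (V, E) with V finite and
  every edge a 2-element subset of V.\<close>
type_synonym graph = "nat set \<times> nat set set"

definition is_graph :: "graph \<Rightarrow> bool" where
  "is_graph G \<longleftrightarrow> finite (fst G) \<and>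
     (\<forall>e\<in>snd G. \<exists>u v. e = {u, v} \<and> u \<noteq> v \<and> u \<in> fst G \<and> v \<in> fst G)"

definition bgraph :: "graph \<Rightarrow> nat set \<Rightarrow> bool" where
  "bgraph G B \<longleftrightarrow> is_graph G \<and> B \<subseteq> fst G"

text \<open>Gluing: union of the graphs, identifying equally named vertices
  (only meaningful when the common vertices lie in the common boundary).\<close>
definition glue :: "graph \<Rightarrow> graph \<Rightarrow> graph" where
  "glue G H = (fst G \<union> fst H, snd G \<union> snd H)"

definition cut_value :: "graph \<Rightarrow> nat set \<Rightarrow> nat" where
  "cut_value G X = card {e \<in> snd G. \<exists>u v. e = {u, v} \<and> u \<in> X \<and> v \<in> fst G - X}"

definition maxcut :: "graph \<Rightarrow> nat" where
  "maxcut G = Max {cut_value G X | X. X \<subseteq> fst G}"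

definition gluing_equiv :: "nat set \<Rightarrow> graph \<Rightarrow> graph \<Rightarrow> bool" where
  "gluing_equiv B G G' \<longleftrightarrow> (\<exists>\<Delta>::int. \<forall>H. bgraph H B \<and> fst G \<inter> fst H \<subseteq> B
       \<and> fst G' \<inter> fst H \<subseteq> B \<longrightarrow> int (maxcut (glue G H)) = int (maxcut (glue G' H)) + \<Delta>)"

definition edgeless_outside :: "graph \<Rightarrow> nat set \<Rightarrow> bool" where
  "edgeless_outside G B \<longleftrightarrow> (\<forall>e\<in>snd G. e \<inter> B \<noteq> {})"

definition vc_sol :: "graph \<Rightarrow> nat set \<Rightarrow> bool" where
  "vc_sol G S \<longleftrightarrow> S \<subseteq> fst G \<and> (\<forall>e\<in>snd G. e \<inter> S \<noteq> {})"

definition gsize :: "graph \<Rightarrow> nat" where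
  "gsize G = card (fst G) + card (snd G)"

definition edgeless_dom :: "nat set \<Rightarrow> graph set" where
  "edgeless_dom B = {G. bgraph G B \<and> edgeless_outside G B}"

definition equiv_rel_on :: "nat set \<Rightarrow> (graph \<times> graph) set" where
  "equiv_rel_on B = {(G, G'). G \<in> edgeless_dom B \<and> G' \<in> edgeless_dom B \<and> gluing_equiv B G G'}"

text \<open>A boundaried kernelization (of size f) for MaxCut[vc], abstracted to a function:
  K maps (G, B, s) to (G', s', Delta).\<close>
definition is_bkernel ::
  "(nat \<Rightarrow> nat) \<Rightarrow> (graph \<Rightarrow> nat set \<Rightarrow> nat set \<Rightarrow> graph \<times> nat set \<times> int) \<Rightarrow> bool" where
  "is_bkernel f K \<longleftrightarrow> (\<forall>G B S. bgraph G B \<and> vc_sol G S \<longrightarrow>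
     (case K G B S of (G', S', \<Delta>) \<Rightarrow>
        bgraph G' B \<and> vc_sol G' S' \<and>
        gsize G' \<le> f (card B + card S) \<and> card S' \<le> f (card B + card S) \<and>
        gluing_equiv B G G' \<and>
        (\<forall>H. bgraph H B \<and> fst G \<inter> fst H \<subseteq> B \<and> fst G' \<inter> fst H \<subseteq> B \<longrightarrow>
           int (maxcut (glue G H)) = int (maxcut (glue G' H)) + \<Delta>)))"

end

theory Submission
  imports Defs
begin

lemma is_graph_finite_edges:
  assumes "is_graph G" shows "finite (snd G)"
proof -
  have "\<forall>e\<in>snd G. e \<subseteq> fst G" using assms unfolding is_graph_def by fastforce
  hence "snd G \<subseteq> Pow (fst G)" by auto
  moreover have "finite (fst G)" using assms unfolding is_graph_def by simp
  ultimately show ?thesis using finite_subset by blast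
qed
definition cutset :: "graph \<Rightarrow> nat set \<Rightarrow> nat set set" where
  "cutset G X = {e \<in> snd G. \<exists>u v. e = {u, v} \<and> u \<in> X \<and> v \<in> fst G - X}"

lemma cut_value_cutset: "cut_value G X = card (cutset G X)"
  unfolding cut_value_def cutset_def by simp

lemma cut_sep: "{u, v} \<in> cutset G X \<Longrightarrow> (u \<in> X) = (v \<notin> X)"
  unfolding cutset_def by (auto simp: doubleton_eq_iff)

lemma cutI: "{u, v} \<in> snd G \<Longrightarrow> u \<in> X \<Longrightarrow> v \<in> fst G \<Longrightarrow> v \<notin> X \<Longrightarrow> {u, v} \<in> cutset G X"
  unfolding cutset_def by blast
lemma maxcut_ge:
  assumes "finite (fst G)" "X \<subseteq> fst G"
  shows "cut_value G X \<le> maxcut G"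
proof -
  have "{cut_value G X | X. X \<subseteq> fst G} = (\<lambda>X. cut_value G X) ` Pow (fst G)" by auto
  hence fin: "finite {cut_value G X | X. X \<subseteq> fst G}" using assms(1) by simp
  show ?thesis unfolding maxcut_def by (rule Max_ge[OF fin]) (use assms(2) in blast)
qed

lemma maxcut_le:
  assumes "finite (fst G)" "\<And>X. X \<subseteq> fst G \<Longrightarrow> cut_value G X \<le> k"
  shows "maxcut G \<le> k"
proof -
  have "{cut_value G X | X. X \<subseteq> fst G} = (\<lambda>X. cut_value G X) ` Pow (fst G)" by auto
  hence fin: "finite {cut_value G X | X. X \<subseteq> fst G}" using assms(1) by simp
  have ne: "{cut_value G X | X. X \<subseteq> fst G} \<noteq> {}" by blast
  show ?thesis unfolding maxcut_def using Max_le_iff[OF fin ne] assms(2) by blast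
qed

lemma cut_value_le_edges:
  assumes "finite (snd G)" shows "cut_value G X \<le> card (snd G)"
  unfolding cut_value_cutset by (rule card_mono[OF assms]) (auto simp: cutset_def)
lemma card4: "card {a, b, c, d :: 'a} \<le> 4"
  by (rule card_insert_le_m1, simp)+ simp

lemma card5: "card {a, b, c, d, e :: 'a} \<le> 5"
  by (rule card_insert_le_m1, simp)+ simp
definition Ga :: "nat \<Rightarrow> nat \<Rightarrow> nat \<Rightarrow> nat \<Rightarrow> graph" where
  "Ga x y n a = ({x, y} \<union> {n..<n+a},
     (\<lambda>i. {x, n+i}) ` {..<a} \<union> (\<lambda>i. {y, n+i}) ` {..<a})"

definition Hp :: "nat \<Rightarrow> nat \<Rightarrow> nat \<Rightarrow> nat \<Rightarrow> graph" where
  "Hp x y m a = ({x, y} \<union> {m..<m+2*a},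
     (\<lambda>i. {x, m+2*i}) ` {..<a} \<union> (\<lambda>i. {m+2*i, m+2*i+1}) ` {..<a} \<union> (\<lambda>i. {m+2*i+1, y}) ` {..<a})"

definition H0 :: "nat \<Rightarrow> nat \<Rightarrow> graph" where
  "H0 x y = ({x, y}, {})"

lemma edge_img:
  assumes "\<And>i. i < a \<Longrightarrow> f i \<noteq> g i \<and> f i \<in> V \<and> g i \<in> V"
  shows "\<forall>e \<in> (\<lambda>i. {f i, g i}) ` {..<a}. \<exists>u v. e = {u, v} \<and> u \<noteq> v \<and> u \<in> V \<and> v \<in> V"
  using assms by blast

lemma Ga_graph: assumes "x \<noteq> y" "x < n" "y < n" shows "bgraph (Ga x y n a) {x, y}"
proof -
  let ?V = "{x, y} \<union> {n..<n+a}"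
  have 1: "\<forall>e \<in> (\<lambda>i. {x, n+i}) ` {..<a}. \<exists>u v. e = {u, v} \<and> u \<noteq> v \<and> u \<in> ?V \<and> v \<in> ?V"
    by (rule edge_img) (use assms in auto)
  have 2: "\<forall>e \<in> (\<lambda>i. {y, n+i}) ` {..<a}. \<exists>u v. e = {u, v} \<and> u \<noteq> v \<and> u \<in> ?V \<and> v \<in> ?V"
    by (rule edge_img) (use assms in auto)
  show ?thesis unfolding bgraph_def is_graph_def Ga_def fst_conv snd_conv ball_Un
    using 1 2 by simp
qed

lemma Hp_graph: assumes "x \<noteq> y" "x < m" "y < m" shows "bgraph (Hp x y m a) {x, y}"
proof -
  let ?V = "{x, y} \<union> {m..<m+2*a}"
  have 1: "\<forall>e \<in> (\<lambda>i. {x, m+2*i}) ` {..<a}. \<exists>u v. e = {u, v} \<and> u \<noteq> v \<and> u \<in> ?V \<and> v \<in> ?V"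
    by (rule edge_img) (use assms in auto)
  have 2: "\<forall>e \<in> (\<lambda>i. {m+2*i, m+2*i+1}) ` {..<a}. \<exists>u v. e = {u, v} \<and> u \<noteq> v \<and> u \<in> ?V \<and> v \<in> ?V"
    by (rule edge_img) (use assms in auto)
  have 3: "\<forall>e \<in> (\<lambda>i. {m+2*i+1, y}) ` {..<a}. \<exists>u v. e = {u, v} \<and> u \<noteq> v \<and> u \<in> ?V \<and> v \<in> ?V"
    by (rule edge_img) (use assms in auto)
  show ?thesis unfolding bgraph_def is_graph_def Hp_def fst_conv snd_conv ball_Un
    using 1 2 3 by simp
qed

lemma H0_graph: assumes "x \<noteq> y" shows "bgraph (H0 x y) {x, y}"
  using assms unfolding bgraph_def is_graph_def H0_def by simp





lemma Ga_inj1: "(x::nat) < n \<Longrightarrow> inj_on (\<lambda>i. {x, n+i}) A"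
  by (auto simp: inj_on_def doubleton_eq_iff)

lemma Ga_card: assumes "x \<noteq> y" "x < n" "y < n" shows "card (snd (Ga x y n a)) = 2*a"
proof -
  have d: "(\<lambda>i. {x, n+i}) ` {..<a} \<inter> (\<lambda>i. {y, n+i}) ` {..<a} = {}"
    using assms by (auto simp: doubleton_eq_iff)
  have "card (snd (Ga x y n a)) = card ((\<lambda>i. {x, n+i}) ` {..<a}) + card ((\<lambda>i. {y, n+i}) ` {..<a})"
    unfolding Ga_def snd_conv by (rule card_Un_disjoint) (use d in auto)
  also have "\<dots> = a + a"
    using card_image[OF Ga_inj1[OF assms(2)]] card_image[OF Ga_inj1[OF assms(3)]] by simp
  finally show ?thesis by simp
qed

lemma Ga_card_le: "card (snd (Ga x y n a)) \<le> 2*a"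
proof -
  have "card (snd (Ga x y n a)) \<le> card ((\<lambda>i. {x, n+i}) ` {..<a}) + card ((\<lambda>i. {y, n+i}) ` {..<a})"
    unfolding Ga_def snd_conv by (rule card_Un_le)
  also have "\<dots> \<le> a + a" using card_image_le[of "{..<a}"] by (metis add_mono card_lessThan finite_lessThan)
  finally show ?thesis by simp
qed

lemma glue_H0: "x \<in> fst G \<Longrightarrow> y \<in> fst G \<Longrightarrow> glue G (H0 x y) = G"
  unfolding glue_def H0_def by (cases G) auto

lemma Ga_fin: "finite (fst (Ga x y n a))" by (simp add: Ga_def)
lemma Hp_fin: "finite (fst (Hp x y m a))" by (simp add: Hp_def)

lemma A_bound: assumes "x \<noteq> y" "x < n" "y < n"
  shows "2*a \<le> maxcut (glue (Ga x y n a) (H0 x y))"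
proof -
  have g: "glue (Ga x y n a) (H0 x y) = Ga x y n a" by (rule glue_H0) (auto simp: Ga_def)
  have "cutset (Ga x y n a) {x,y} = snd (Ga x y n a)"
  proof
    show "cutset (Ga x y n a) {x, y} \<subseteq> snd (Ga x y n a)" by (auto simp: cutset_def)
    show "snd (Ga x y n a) \<subseteq> cutset (Ga x y n a) {x, y}"
    proof
      fix e assume "e \<in> snd (Ga x y n a)"
      then obtain i z where i: "i < a" "z \<in> {x,y}" "e = {z, n+i}" by (auto simp: Ga_def)
      show "e \<in> cutset (Ga x y n a) {x, y}" unfolding i(3)
        by (rule cutI) (use i \<open>e \<in> _\<close> assms in \<open>auto simp: Ga_def\<close>)
    qed
  qed
  hence "cut_value (Ga x y n a) {x,y} = 2*a" using Ga_card[OF assms] by (simp add: cut_value_cutset)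
  moreover have "cut_value (Ga x y n a) {x,y} \<le> maxcut (Ga x y n a)"
    by (rule maxcut_ge) (auto simp: Ga_def)
  ultimately show ?thesis using g by simp
qed

lemma Gb_cut: assumes "x \<noteq> y" "x < n" "y < n"
  shows "b \<le> cut_value (Ga x y n b) ({x} \<union> {n..<n+b})"
proof -
  have sub: "(\<lambda>i. {y, n+i}) ` {..<b} \<subseteq> cutset (Ga x y n b) ({x} \<union> {n..<n+b})"
  proof
    fix e assume "e \<in> (\<lambda>i. {y, n+i}) ` {..<b}"
    then obtain i where i: "i < b" "e = {n+i, y}" by auto
    show "e \<in> cutset (Ga x y n b) ({x} \<union> {n..<n+b})" unfolding i(2)
      by (rule cutI) (use i assms in \<open>auto simp: Ga_def\<close>)
  qed
  have fin: "finite (cutset (Ga x y n b) ({x} \<union> {n..<n+b}))"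
    unfolding cutset_def Ga_def by auto
  have "b = card ((\<lambda>i. {y, n+i}) ` {..<b})" using card_image[OF Ga_inj1[OF assms(3)]] by simp
  also have "\<dots> \<le> card (cutset (Ga x y n b) ({x} \<union> {n..<n+b}))" by (rule card_mono[OF fin sub])
  finally show ?thesis by (simp add: cut_value_cutset)
qed

lemma C_bound: assumes "is_graph G" "x \<in> fst G" "y \<in> fst G"
  shows "maxcut (glue G (H0 x y)) \<le> card (snd G)"
proof -
  have "maxcut G \<le> card (snd G)"
    by (rule maxcut_le) (use assms is_graph_finite_edges cut_value_le_edges in \<open>auto simp: is_graph_def\<close>)
  thus ?thesis using glue_H0[OF assms(2,3)] by simp
qed



lemma cyc_bound:
  fixes G :: graph
  shows "card (cutset G X \<inter> {{x, c}, {y, c}, {x, p}, {p, q}, {q, y}}) \<le> 4"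
proof -
  let ?C = "cutset G X"
  let ?S = "{{x, c}, {y, c}, {x, p}, {p, q}, {q, y}}"
  have "\<not> ({x, c} \<in> ?C \<and> {y, c} \<in> ?C \<and> {x, p} \<in> ?C \<and> {p, q} \<in> ?C \<and> {q, y} \<in> ?C)"
  proof
    assume h: "{x, c} \<in> ?C \<and> {y, c} \<in> ?C \<and> {x, p} \<in> ?C \<and> {p, q} \<in> ?C \<and> {q, y} \<in> ?C"
    have 1: "(x \<in> X) = (c \<notin> X)" using h cut_sep[of x c G X] by simp
    have 2: "(y \<in> X) = (c \<notin> X)" using h cut_sep[of y c G X] by simp
    have 3: "(x \<in> X) = (p \<notin> X)" using h cut_sep[of x p G X] by simp
    have 4: "(p \<in> X) = (q \<notin> X)" using h cut_sep[of p q G X] by simp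
    have 5: "(q \<in> X) = (y \<notin> X)" using h cut_sep[of q y G X] by simp
    show False using 1 2 3 4 5 by simp
  qed
  hence "\<exists>e\<in>?S. e \<notin> ?C" by simp
  then obtain e where e: "e \<in> ?S" "e \<notin> ?C" by blast
  have "card (?C \<inter> ?S) \<le> card (?S - {e})" by (rule card_mono) (use e in auto)
  also have "\<dots> = card ?S - 1" using e(1) by (simp add: card_Diff_singleton)
  also have "\<dots> \<le> 4" using card5[of "{x,c}" "{y,c}" "{x,p}" "{p,q}" "{q,y}"] by simp
  finally show ?thesis .
qed


lemma UN_split: "A \<subseteq> (\<Union>i\<in>I. B i) \<Longrightarrow> A = (\<Union>i\<in>I. A \<inter> B i)" by blast
lemma img_UN: "(\<And>i. i < a \<Longrightarrow> f i \<in> C i) \<Longrightarrow> f ` {..<a} \<subseteq> (\<Union>i\<in>{..<a}. C i)" by blast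

lemma B_bound:
  shows "maxcut (glue (Ga x y n a) (Hp x y m a)) \<le> 4*a"
proof (rule maxcut_le)
  show "finite (fst (glue (Ga x y n a) (Hp x y m a)))" by (simp add: glue_def Ga_def Hp_def)
  fix X
  let ?G = "glue (Ga x y n a) (Hp x y m a)"
  let ?cyc = "\<lambda>i. {{x, n+i}, {y, n+i}, {x, m+2*i}, {m+2*i, m+2*i+1}, {m+2*i+1, y}}"
  have s1: "cutset ?G X \<subseteq> snd ?G" by (auto simp: cutset_def)
  have s2: "snd ?G \<subseteq> (\<Union>i\<in>{..<a}. ?cyc i)"
    unfolding glue_def Ga_def Hp_def snd_conv Un_subset_iff
    by (intro conjI img_UN) auto
  have "cutset ?G X = (\<Union>i\<in>{..<a}. cutset ?G X \<inter> ?cyc i)"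
    by (rule UN_split) (rule order_trans[OF s1 s2])
  hence "card (cutset ?G X) \<le> (\<Sum>i\<in>{..<a}. card (cutset ?G X \<inter> ?cyc i))"
    using card_UN_le[of "{..<a}" "\<lambda>i. cutset ?G X \<inter> ?cyc i"] by simp
  also have "\<dots> \<le> (\<Sum>i\<in>{..<a}. 4)" by (rule sum_mono) (rule cyc_bound)
  finally show "cut_value ?G X \<le> 4*a" by (simp add: cut_value_cutset)
qed


lemma Hp_card: assumes "x \<noteq> y" "x < m" "y < m" shows "card (snd (Hp x y m a)) = 3*a"
proof -
  let ?P1 = "(\<lambda>i. {x, m+2*i}) ` {..<a}" and ?P2 = "(\<lambda>i. {m+2*i, m+2*i+1}) ` {..<a}"
    and ?P3 = "(\<lambda>i. {m+2*i+1, y}) ` {..<a}"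
  have i1: "inj_on (\<lambda>i. {x, m+2*i}) {..<a}" using assms by (auto simp: inj_on_def doubleton_eq_iff)
  have i2: "inj_on (\<lambda>i. {m+2*i, m+2*i+1}) {..<a}" by (auto simp: inj_on_def doubleton_eq_iff)
  have i3: "inj_on (\<lambda>i. {m+2*i+1, y}) {..<a}" using assms by (auto simp: inj_on_def doubleton_eq_iff)
  have d1: "?P1 \<inter> ?P2 = {}" using assms by (auto simp: doubleton_eq_iff)
  have d2: "(?P1 \<union> ?P2) \<inter> ?P3 = {}" using assms by (auto simp: doubleton_eq_iff)
  have "card (snd (Hp x y m a)) = card (?P1 \<union> ?P2) + card ?P3"
    unfolding Hp_def snd_conv by (rule card_Un_disjoint) (use d2 in auto)
  also have "card (?P1 \<union> ?P2) = card ?P1 + card ?P2" by (rule card_Un_disjoint) (use d1 in auto)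
  finally show ?thesis using card_image[OF i1] card_image[OF i2] card_image[OF i3] by simp
qed



lemma edge_sub: "is_graph G \<Longrightarrow> e \<in> snd G \<Longrightarrow> e \<subseteq> fst G"
  unfolding is_graph_def by fastforce


lemma D_bound:
  assumes g: "is_graph G" and vm: "\<forall>v\<in>fst G. v < m" and xy: "x \<noteq> y" "x < m" "y < m"
    and Y: "Y \<subseteq> fst G" "x \<in> Y" "y \<notin> Y"
  shows "3*a + cut_value G Y \<le> maxcut (glue G (Hp x y m a))"
proof -
  let ?GH = "glue G (Hp x y m a)"
  let ?Q = "(\<lambda>i. m+2*i+1) ` {..<a}"
  let ?X = "Y \<union> ?Q"
  have finG: "finite (fst G)" using g by (simp add: is_graph_def)
  have finE: "finite (snd G)" by (rule is_graph_finite_edges[OF g])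
  have Ym: "\<forall>v\<in>Y. v < m" using Y vm by blast
  have sub1: "cutset G Y \<subseteq> cutset ?GH ?X"
  proof
    fix e assume "e \<in> cutset G Y"
    then obtain u v where e: "e \<in> snd G" "e = {u,v}" "u \<in> Y" "v \<in> fst G" "v \<notin> Y"
      unfolding cutset_def by blast
    have "v < m" using vm e(4) by blast
    hence "v \<notin> ?Q" by auto
    show "e \<in> cutset ?GH ?X" unfolding e(2)
      by (rule cutI) (use e \<open>v \<notin> ?Q\<close> in \<open>auto simp: glue_def\<close>)
  qed
  have sub2: "snd (Hp x y m a) \<subseteq> cutset ?GH ?X"
  proof
    fix e assume e: "e \<in> snd (Hp x y m a)"
    have xX: "x \<in> ?X" using Y by blast
    have yX: "y \<notin> ?X" using Y xy by auto
    have eG: "e \<in> snd ?GH" using e by (simp add: glue_def)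
    consider (a) i where "i < a" "e = {x, m+2*i}" | (b) i where "i < a" "e = {m+2*i, m+2*i+1}"
      | (c) i where "i < a" "e = {m+2*i+1, y}" using e unfolding Hp_def by auto
    thus "e \<in> cutset ?GH ?X"
    proof cases
      case a
      have "m+2*i \<notin> ?X" using Ym by auto presburger
      thus ?thesis using a eG xX unfolding a(2) by (intro cutI) (auto simp: glue_def Hp_def)
    next
      case b
      have e': "e = {m+2*i+1, m+2*i}" using b by auto
      have "m+2*i \<notin> ?X" using Ym by auto presburger
      thus ?thesis using b eG unfolding e' by (intro cutI) (auto simp: glue_def Hp_def)
    next
      case c
      thus ?thesis using eG yX unfolding c(2) by (intro cutI) (auto simp: glue_def Hp_def)
    qed
  qed
  have disj: "cutset G Y \<inter> snd (Hp x y m a) = {}"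
  proof (rule ccontr)
    assume "cutset G Y \<inter> snd (Hp x y m a) \<noteq> {}"
    then obtain e where e1: "e \<in> snd G" and e2: "e \<in> snd (Hp x y m a)"
      unfolding cutset_def by blast
    have "e \<subseteq> fst G" by (rule edge_sub[OF g e1])
    moreover have "\<exists>w\<in>e. m \<le> w" using e2 unfolding Hp_def by fastforce
    then obtain w where "w \<in> e" "m \<le> w" by blast
    ultimately show False using vm by force
  qed
  have finC: "finite (cutset ?GH ?X)"
  proof (rule finite_subset)
    show "cutset ?GH ?X \<subseteq> snd ?GH" by (auto simp: cutset_def)
    show "finite (snd ?GH)" using finE by (simp add: glue_def Hp_def)
  qed
  have "3*a + cut_value G Y = card (cutset G Y \<union> snd (Hp x y m a))"
  proof -
    have "card (cutset G Y \<union> snd (Hp x y m a)) = card (cutset G Y) + card (snd (Hp x y m a))"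
      by (rule card_Un_disjoint) (use finE disj in \<open>auto simp: Hp_def cutset_def\<close>)
    thus ?thesis using Hp_card[OF xy] by (simp add: cut_value_cutset)
  qed
  also have "\<dots> \<le> card (cutset ?GH ?X)" by (rule card_mono[OF finC]) (use sub1 sub2 in blast)
  also have "\<dots> = cut_value ?GH ?X" by (simp add: cut_value_cutset)
  also have "\<dots> \<le> maxcut ?GH"
    by (rule maxcut_ge) (use finG Y in \<open>auto simp: glue_def Hp_def\<close>)
  finally show ?thesis .
qed



lemma KEY:
  assumes xy: "x \<noteq> y" "x < n" "y < n" and g: "is_graph G" and xyG: "x \<in> fst G" "y \<in> fst G"
    and Y: "Y \<subseteq> fst G" "x \<in> Y" "y \<notin> Y"
    and eq: "\<forall>H. bgraph H {x,y} \<and> fst (Ga x y n a) \<inter> fst H \<subseteq> {x,y} \<and> fst G \<inter> fst H \<subseteq> {x,y}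
       \<longrightarrow> int (maxcut (glue (Ga x y n a) H)) = int (maxcut (glue G H)) + \<Delta>"
  shows "a + cut_value G Y \<le> card (snd G)"
proof -
  have finG: "finite (fst G)" using g by (simp add: is_graph_def)
  define m where "m = Max (fst G) + n + a + 1"
  have vm: "\<forall>v\<in>fst G. v < m" using Max_ge[OF finG] unfolding m_def by fastforce
  have xm: "x < m" "y < m" using xy unfolding m_def by auto
  have e0: "int (maxcut (glue (Ga x y n a) (H0 x y))) = int (maxcut (glue G (H0 x y))) + \<Delta>"
    using eq H0_graph[OF xy(1)] by (auto simp: H0_def)
  have c1: "fst (Ga x y n a) \<inter> fst (Hp x y m a) \<subseteq> {x,y}" unfolding Ga_def Hp_def m_def by auto
  have c2: "fst G \<inter> fst (Hp x y m a) \<subseteq> {x,y}" using vm unfolding Hp_def by auto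
  have e1: "int (maxcut (glue (Ga x y n a) (Hp x y m a))) = int (maxcut (glue G (Hp x y m a))) + \<Delta>"
    using eq Hp_graph[OF xy(1) xm] c1 c2 by blast
  have A: "2*a \<le> maxcut (glue (Ga x y n a) (H0 x y))" by (rule A_bound[OF xy])
  have B: "maxcut (glue (Ga x y n a) (Hp x y m a)) \<le> 4*a" by (rule B_bound)
  have C: "maxcut (glue G (H0 x y)) \<le> card (snd G)" by (rule C_bound[OF g xyG])
  have D: "3*a + cut_value G Y \<le> maxcut (glue G (Hp x y m a))" by (rule D_bound[OF g vm xy(1) xm Y])
  from A B C D have "int (2*a) \<le> int (maxcut (glue (Ga x y n a) (H0 x y)))"
    "int (maxcut (glue (Ga x y n a) (Hp x y m a))) \<le> int (4*a)"
    "int (maxcut (glue G (H0 x y))) \<le> int (card (snd G))"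
    "int (3*a + cut_value G Y) \<le> int (maxcut (glue G (Hp x y m a)))" by simp_all
  with e0 e1 have "int (a + cut_value G Y) \<le> int (card (snd G))" by simp
  thus ?thesis by simp
qed



lemma Ga_dom: assumes "x \<noteq> y" "x < n" "y < n" shows "Ga x y n a \<in> edgeless_dom {x,y}"
  using Ga_graph[OF assms] unfolding edgeless_dom_def edgeless_outside_def by (auto simp: Ga_def)

lemma NE: assumes xy: "x \<noteq> y" "x < n" "y < n" and ge: "gluing_equiv {x,y} (Ga x y n a) (Ga x y n b)"
  and ba: "b < a" shows False
proof -
  obtain \<Delta> where eq: "\<forall>H. bgraph H {x,y} \<and> fst (Ga x y n a) \<inter> fst H \<subseteq> {x,y}
       \<and> fst (Ga x y n b) \<inter> fst H \<subseteq> {x,y}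
       \<longrightarrow> int (maxcut (glue (Ga x y n a) H)) = int (maxcut (glue (Ga x y n b) H)) + \<Delta>"
    using ge unfolding gluing_equiv_def by blast
  have gb: "is_graph (Ga x y n b)" using Ga_graph[OF xy] by (simp add: bgraph_def)
  have "a + cut_value (Ga x y n b) ({x} \<union> {n..<n+b}) \<le> card (snd (Ga x y n b))"
    by (rule KEY[OF xy gb _ _ _ _ _ eq]) (use xy in \<open>auto simp: Ga_def\<close>)
  moreover have "b \<le> cut_value (Ga x y n b) ({x} \<union> {n..<n+b})" by (rule Gb_cut[OF xy])
  moreover have "card (snd (Ga x y n b)) \<le> 2*b" by (rule Ga_card_le)
  ultimately show False using ba by simp
qed



theorem mainTheorem11:
  fixes x y :: nat
  assumes "x \<noteq> y"
  shows "infinite (edgeless_dom {x, y} // equiv_rel_on {x, y})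
         \<and> \<not> (\<exists>f K. is_bkernel f K)"
proof
  define n where "n = x + y + 1"
  have xy: "x \<noteq> y" "x < n" "y < n" using assms unfolding n_def by auto
  let ?r = "equiv_rel_on {x, y}"
  define cls where "cls a = ?r `` {Ga x y n a}" for a
  have refl: "Ga x y n a \<in> cls a" for a
    using Ga_dom[OF xy] unfolding cls_def equiv_rel_on_def gluing_equiv_def
    by (auto intro: exI[of _ 0])
  have inj: "inj cls"
  proof (rule injI)
    fix a b assume h: "cls a = cls b"
    have "Ga x y n a \<in> cls b" using refl[of a] unfolding h .
    hence "(Ga x y n b, Ga x y n a) \<in> ?r" unfolding cls_def by simp
    hence 1: "gluing_equiv {x,y} (Ga x y n b) (Ga x y n a)" unfolding equiv_rel_on_def by simp
    have "Ga x y n b \<in> cls a" using refl[of b] unfolding h[symmetric] .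
    hence "(Ga x y n a, Ga x y n b) \<in> ?r" unfolding cls_def by simp
    hence 2: "gluing_equiv {x,y} (Ga x y n a) (Ga x y n b)" unfolding equiv_rel_on_def by simp
    show "a = b"
    proof (rule ccontr)
      assume "a \<noteq> b"
      hence "a < b \<or> b < a" by arith
      thus False using NE[OF xy 1] NE[OF xy 2] by blast
    qed
  qed
  have rng: "range cls \<subseteq> edgeless_dom {x, y} // ?r"
    unfolding cls_def using Ga_dom[OF xy] by (auto intro: quotientI)
  show "infinite (edgeless_dom {x, y} // ?r)"
  proof
    assume "finite (edgeless_dom {x, y} // ?r)"
    hence "finite (range cls)" using rng finite_subset by blast
    hence "finite (UNIV :: nat set)" using finite_imageD[OF _ inj] by blast
    thus False by simp
  qed
  show "\<not> (\<exists>f K. is_bkernel f K)"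
  proof
    assume "\<exists>f K. is_bkernel f K"
    then obtain f K where k: "is_bkernel f K" by blast
    define a where "a = f 4 + 1"
    define G where "G = Ga x y n a"
    have bg: "bgraph G {x,y}" unfolding G_def by (rule Ga_graph[OF xy])
    have vc: "vc_sol G {x,y}" unfolding vc_sol_def G_def Ga_def by auto
    have c2: "card {x,y} = 2" using xy by simp
    obtain G' S' \<Delta> where KG: "K G {x,y} {x,y} = (G', S', \<Delta>)" by (cases "K G {x,y} {x,y}") auto
    note kk = k[unfolded is_bkernel_def, rule_format, OF conjI[OF bg vc]]
    have P: "bgraph G' {x,y}" "gsize G' \<le> f 4"
      "\<forall>H. bgraph H {x,y} \<and> fst G \<inter> fst H \<subseteq> {x,y} \<and> fst G' \<inter> fst H \<subseteq> {x,y} \<longrightarrow>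
           int (maxcut (glue G H)) = int (maxcut (glue G' H)) + \<Delta>"
      using kk unfolding KG c2 by simp_all
    have g': "is_graph G'" "x \<in> fst G'" "y \<in> fst G'" using P(1) by (auto simp: bgraph_def)
    have "a + cut_value G' {x} \<le> card (snd G')"
      by (rule KEY[OF xy g' _ _ _ P(3)[unfolded G_def]]) (use g' xy in auto)
    moreover have "card (snd G') \<le> f 4" using P(2) by (simp add: gsize_def)
    ultimately show False unfolding a_def by simp
  qed
qed


end
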